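(* Let $V=\{v_1,\dots,v_k\}$ be an amenable collection of vectors subordinate to a $\mathbb{Q}$-nef partition $E_1,\dots,E_{k+1}$ of a complete fan $\Sigma$ in $M_\mathbb{R}$. Then $\mathrm{span}_\mathbb{Z}(v_1,\dots,v_k)$ is a saturated sublattice of $N$. In particular, there is a basis of $N$ containing $v_1,\dots,v_k$.
   Context: $M$ lattice of rank $n$, $N=\mathrm{Hom}(M,\mathbb{Z})$; $\Sigma$ complete fan of strictly convex rational cones in $M_\mathbb{R}$, $\Sigma[1]\subset M$ its primitive ray generators. A $\mathbb{Q}$-nef partition is an ordered partition $\Sigma[1]=E_1\sqcup\dots\sqcup E_{k+1}$ (with convex $\Sigma$-piecewise linear rational functions $\varphi_i$, $\varphi_i(\rho)=\delta_{ij}$ for $\rho\in E_j$). An amenable collection subordinate to it is $V=\{v_1,\dots,v_k\}\subset N$ with $\langle v_i,\rho\rangle=-1$ for $\rho\in E_i$, $\langle v_i,\rho\rangle\ge0$ for $\rho\in E_j$ with $i<j\le k+1$, and $\langle v_i,\rho\rangle=0$ for $\rho\in E_j$ with $j<i$. *)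

theory Defs
  imports "HOL-Analysis.Analysis"
begin

text \<open>The lattice M of rank n is Z^n, modelled as int^'n (finite index type 'n,
  n = CARD('n)); M_R = real^'n. The dual lattice N = Hom(M,Z) is identified with int^'n via
  the standard pairing.\<close>

definition latr :: "int^'n \<Rightarrow> real^'n" where
  "latr x = (\<chi> i. real_of_int (x $ i))"

definition pairing :: "int^'n \<Rightarrow> int^'n \<Rightarrow> int" where
  "pairing v m = (\<Sum>i\<in>UNIV. v $ i * m $ i)"

definition rat_poly_cone :: "(real^'n) set \<Rightarrow> bool" where
  "rat_poly_cone \<sigma> \<longleftrightarrow> (\<exists>S::(int^'n) set. finite S \<and>
      \<sigma> = {\<Sum>s\<in>S. c s *\<^sub>R latr s | c. \<forall>s\<in>S. 0 \<le> c s})"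

definition strictly_convex_cone :: "(real^'n) set \<Rightarrow> bool" where
  "strictly_convex_cone \<sigma> \<longleftrightarrow> (\<forall>x. x \<in> \<sigma> \<and> - x \<in> \<sigma> \<longrightarrow> x = 0)"

definition cone_face :: "(real^'n) set \<Rightarrow> (real^'n) set \<Rightarrow> bool" where
  "cone_face \<tau> \<sigma> \<longleftrightarrow> (\<exists>u::real^'n. (\<forall>x\<in>\<sigma>. 0 \<le> u \<bullet> x) \<and> \<tau> = {x\<in>\<sigma>. u \<bullet> x = 0})"

definition is_fan :: "(real^'n) set set \<Rightarrow> bool" where
  "is_fan \<Sigma> \<longleftrightarrow> finite \<Sigma> \<and>
     (\<forall>\<sigma>\<in>\<Sigma>. rat_poly_cone \<sigma> \<and> strictly_convex_cone \<sigma>) \<and>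
     (\<forall>\<sigma>\<in>\<Sigma>. \<forall>\<tau>. cone_face \<tau> \<sigma> \<longrightarrow> \<tau> \<in> \<Sigma>) \<and>
     (\<forall>\<sigma>\<in>\<Sigma>. \<forall>\<sigma>'\<in>\<Sigma>. cone_face (\<sigma> \<inter> \<sigma>') \<sigma> \<and> cone_face (\<sigma> \<inter> \<sigma>') \<sigma>')"

definition complete_fan :: "(real^'n) set set \<Rightarrow> bool" where
  "complete_fan \<Sigma> \<longleftrightarrow> is_fan \<Sigma> \<and> \<Union>\<Sigma> = UNIV"

definition primitive :: "int^'n \<Rightarrow> bool" where
  "primitive \<rho> \<longleftrightarrow> \<rho> \<noteq> 0 \<and> (\<forall>(m::int) (y::int^'n). \<rho> = m *s y \<longrightarrow> \<bar>m\<bar> = 1)"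

definition rays :: "(real^'n) set set \<Rightarrow> (int^'n) set" where
  "rays \<Sigma> = {\<rho>. primitive \<rho> \<and> {c *\<^sub>R latr \<rho> | c. 0 \<le> c} \<in> \<Sigma>}"

definition rational_pl :: "(real^'n) set set \<Rightarrow> (real^'n \<Rightarrow> real) \<Rightarrow> bool" where
  "rational_pl \<Sigma> \<phi> \<longleftrightarrow> (\<forall>\<sigma>\<in>\<Sigma>. \<exists>u::real^'n. (\<forall>i. u $ i \<in> \<rat>) \<and> (\<forall>x\<in>\<sigma>. \<phi> x = u \<bullet> x))"

definition Q_nef_partition ::
  "(real^'n) set set \<Rightarrow> nat \<Rightarrow> (nat \<Rightarrow> (int^'n) set) \<Rightarrow> (nat \<Rightarrow> real^'n \<Rightarrow> real) \<Rightarrow> bool" where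
  "Q_nef_partition \<Sigma> k E \<phi> \<longleftrightarrow>
     (\<forall>i\<in>{1..k+1}. E i \<noteq> {}) \<and>
     (\<forall>i\<in>{1..k+1}. \<forall>j\<in>{1..k+1}. i \<noteq> j \<longrightarrow> E i \<inter> E j = {}) \<and>
     (\<Union>i\<in>{1..k+1}. E i) = rays \<Sigma> \<and>
     (\<forall>i\<in>{1..k+1}. rational_pl \<Sigma> (\<phi> i) \<and> convex_on UNIV (\<phi> i) \<and>
        (\<forall>j\<in>{1..k+1}. \<forall>\<rho>\<in>E j. \<phi> i (latr \<rho>) = (if i = j then 1 else 0)))"

definition amenable :: "nat \<Rightarrow> (nat \<Rightarrow> (int^'n) set) \<Rightarrow> (nat \<Rightarrow> int^'n) \<Rightarrow> bool" where
  "amenable k E v \<longleftrightarrow> (\<forall>i\<in>{1..k}.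
     (\<forall>\<rho>\<in>E i. pairing (v i) \<rho> = -1) \<and>
     (\<forall>j\<in>{i<..k+1}. \<forall>\<rho>\<in>E j. 0 \<le> pairing (v i) \<rho>) \<and>
     (\<forall>j\<in>{1..<i}. \<forall>\<rho>\<in>E j. pairing (v i) \<rho> = 0))"

definition zspan :: "nat \<Rightarrow> (nat \<Rightarrow> int^'n) \<Rightarrow> (int^'n) set" where
  "zspan k v = {\<Sum>i\<in>{1..k}. a i *s v i | a. True}"

definition saturated :: "(int^'n) set \<Rightarrow> bool" where
  "saturated L \<longleftrightarrow> (\<forall>(m::int) w. m \<noteq> 0 \<and> m *s w \<in> L \<longrightarrow> w \<in> L)"

definition lattice_basis :: "('n \<Rightarrow> int^'n) \<Rightarrow> bool" where
  "lattice_basis b \<longleftrightarrow> (\<forall>x::int^'n. \<exists>!c::'n \<Rightarrow> int. x = (\<Sum>j\<in>UNIV. c j *s b j))"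

end

theory Submission
  imports Defs
begin

lemma lattice_basis_iff:
  "lattice_basis (b::'n::finite \<Rightarrow> int^'n) \<longleftrightarrow>
    (\<forall>x. \<exists>c. x = (\<Sum>j\<in>UNIV. c j *s b j)) \<and> (\<forall>c. (\<Sum>j\<in>UNIV. c j *s b j) = 0 \<longrightarrow> (\<forall>j. c j = 0))"
proof
  assume L: "lattice_basis b"
  show "(\<forall>x. \<exists>c. x = (\<Sum>j\<in>UNIV. c j *s b j)) \<and> (\<forall>c. (\<Sum>j\<in>UNIV. c j *s b j) = 0 \<longrightarrow> (\<forall>j. c j = 0))"
  proof (intro conjI allI impI)
    fix x show "\<exists>c. x = (\<Sum>j\<in>UNIV. c j *s b j)"
      using L[unfolded lattice_basis_def, rule_format, of x] by (rule ex1_implies_ex)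
  next
    fix c j assume "(\<Sum>j\<in>UNIV. c j *s b j) = 0"
    then have Z1: "(0::int^'n) = (\<Sum>j\<in>UNIV. c j *s b j)" by simp
    have Z2: "(0::int^'n) = (\<Sum>j\<in>UNIV. (\<lambda>_. 0) j *s b j)" by simp
    have U: "\<exists>!c. (0::int^'n) = (\<Sum>j\<in>UNIV. c j *s b j)" using L[unfolded lattice_basis_def, rule_format, of 0] .
    then obtain c0 where h: "\<forall>y. (0::int^'n) = (\<Sum>j\<in>UNIV. y j *s b j) \<longrightarrow> y = c0"
      by (elim ex1E) blast
    have "c = c0" by (rule h[rule_format, OF Z1])
    moreover have "(\<lambda>_. 0) = c0" by (rule h[rule_format, OF Z2])
    ultimately have "c = (\<lambda>_. 0)" by simp
    then show "c j = 0" by simp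
  qed
next
  assume A: "(\<forall>x. \<exists>c. x = (\<Sum>j\<in>UNIV. c j *s b j)) \<and> (\<forall>c. (\<Sum>j\<in>UNIV. c j *s b j) = 0 \<longrightarrow> (\<forall>j. c j = 0))"
  show "lattice_basis b" unfolding lattice_basis_def
  proof
    fix x
    obtain c where c: "x = (\<Sum>j\<in>UNIV. c j *s b j)" using A[THEN conjunct1, rule_format, of x] by (elim exE)
    show "\<exists>!c. x = (\<Sum>j\<in>UNIV. c j *s b j)"
    proof (rule ex1I[of _ c])
      show "x = (\<Sum>j\<in>UNIV. c j *s b j)" by (rule c)
    next
      fix c' assume c': "x = (\<Sum>j\<in>UNIV. c' j *s b j)"
      have "(\<Sum>j\<in>UNIV. (\<lambda>j. c' j - c j) j *s b j) = 0"
        using c c' by (simp only: vector_sub_rdistrib sum_subtractf) simp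
      then have "\<And>j. c' j - c j = 0" by (rule A[THEN conjunct2, rule_format])
      then show "c' = c" by (simp add: fun_eq_iff)
    qed
  qed
qed

lemma std_basis: "lattice_basis (\<lambda>j::'n::finite. axis j (1::int))"
  unfolding lattice_basis_iff
proof (intro conjI allI impI)
  have E: "(\<Sum>j\<in>UNIV. c j *s axis j (1::int)) = (\<chi> i. c i)" for c :: "'n \<Rightarrow> int"
    by (simp add: vec_eq_iff axis_def if_distrib cong: if_cong)
  fix x :: "int^'n"
  show "\<exists>c. x = (\<Sum>j\<in>UNIV. c j *s axis j 1)" by (rule exI[of _ "\<lambda>i. x $ i"]) (simp add: E vec_eq_iff)
next
  have E: "(\<Sum>j\<in>UNIV. c j *s axis j (1::int)) = (\<chi> i. c i)" for c :: "'n \<Rightarrow> int"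
    by (simp add: vec_eq_iff axis_def if_distrib cong: if_cong)
  fix c :: "'n \<Rightarrow> int" and j assume "(\<Sum>j\<in>UNIV. c j *s axis j 1) = 0"
  then show "c j = 0" by (simp add: E vec_eq_iff)
qed

lemma replace_sum:
  fixes b :: "'n::finite \<Rightarrow> int^'n"
  assumes "d jz = 0"
  shows "(\<Sum>l\<in>UNIV. e l *s (b(jz := u *s b jz + (\<Sum>l\<in>UNIV. d l *s b l))) l)
       = (\<Sum>l\<in>UNIV. (if l = jz then e jz * u else e l + e jz * d l) *s b l)"
proof -
  have 1: "(b(jz := u *s b jz + (\<Sum>l\<in>UNIV. d l *s b l))) l
     = b l + (if l = jz then (u - 1) *s b jz + (\<Sum>l\<in>UNIV. d l *s b l) else 0)" for l
    by (simp add: vec_eq_iff algebra_simps)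
  have 2: "(if l = jz then e jz * u else e l + e jz * d l)
     = e l + (if l = jz then e jz * (u - 1) else 0) + e jz * d l" for l
    using assms by (auto simp: algebra_simps)
  define X where "X = (u - 1) *s b jz + (\<Sum>l\<in>UNIV. d l *s b l)"
  have L: "(\<Sum>l\<in>UNIV. e l *s (b(jz := u *s b jz + (\<Sum>l\<in>UNIV. d l *s b l))) l)
      = (\<Sum>l\<in>UNIV. e l *s b l) + e jz *s X"
  proof -
    have "(\<Sum>l\<in>UNIV. e l *s (b(jz := u *s b jz + (\<Sum>l\<in>UNIV. d l *s b l))) l)
       = (\<Sum>l\<in>UNIV. e l *s b l + (if l = jz then e jz *s X else 0))"
      by (rule sum.cong) (auto simp: 1 X_def vec_eq_iff algebra_simps)
    also have "\<dots> = (\<Sum>l\<in>UNIV. e l *s b l) + e jz *s X"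
      by (simp add: sum.distrib)
    finally show ?thesis .
  qed
  have R: "(\<Sum>l\<in>UNIV. (if l = jz then e jz * u else e l + e jz * d l) *s b l)
      = (\<Sum>l\<in>UNIV. e l *s b l) + e jz *s X"
  proof -
    have "(\<Sum>l\<in>UNIV. (if l = jz then e jz * u else e l + e jz * d l) *s b l)
       = (\<Sum>l\<in>UNIV. e l *s b l + ((if l = jz then (e jz * (u - 1)) *s b jz else 0) + (e jz * d l) *s b l))"
      by (rule sum.cong) (auto simp: 2 vec_eq_iff algebra_simps assms)
    also have "\<dots> = (\<Sum>l\<in>UNIV. e l *s b l) + ((e jz * (u - 1)) *s b jz + (\<Sum>l\<in>UNIV. (e jz * d l) *s b l))"
      by (simp add: sum.distrib)
    also have "\<dots> = (\<Sum>l\<in>UNIV. e l *s b l) + e jz *s X"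
      by (simp add: X_def vec_eq_iff algebra_simps sum_distrib_left)
    finally show ?thesis .
  qed
  show ?thesis by (rule trans[OF L R[symmetric]])
qed

lemma replace_basis:
  fixes b :: "'n::finite \<Rightarrow> int^'n"
  assumes B: "lattice_basis b" and u: "u * u = 1" and d: "d jz = 0"
  shows "lattice_basis (b(jz := u *s b jz + (\<Sum>l\<in>UNIV. d l *s b l)))"
  unfolding lattice_basis_iff
proof (intro conjI allI impI)
  fix x
  obtain c where c: "x = (\<Sum>j\<in>UNIV. c j *s b j)" using B unfolding lattice_basis_iff by blast
  let ?e = "\<lambda>l. if l = jz then u * c jz else c l - u * c jz * d l"
  show "\<exists>c. x = (\<Sum>j\<in>UNIV. c j *s (b(jz := u *s b jz + (\<Sum>l\<in>UNIV. d l *s b l))) j)"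
    apply (rule exI[of _ ?e])
    apply (subst replace_sum[where d=d and jz=jz and e="?e" and b=b and u=u, OF d])
    apply (rule trans[OF c])
    apply (rule sum.cong[OF refl])
    subgoal for l
    proof -
      have uu: "u * c jz * u = c jz" using u by (metis mult.commute mult.left_commute mult_1_right)
      show ?thesis by (cases "l = jz") (simp_all add: uu)
    qed
    done
next
  fix e j assume A: "(\<Sum>j\<in>UNIV. e j *s (b(jz := u *s b jz + (\<Sum>l\<in>UNIV. d l *s b l))) j) = 0"
  have S: "(\<Sum>l\<in>UNIV. (\<lambda>l. if l = jz then e jz * u else e l + e jz * d l) l *s b l) = 0"
    using A by (simp only: replace_sum[where d=d and jz=jz and e=e and b=b and u=u, OF d])
  have z: "\<forall>l. (if l = jz then e jz * u else e l + e jz * d l) = 0"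
    using B[unfolded lattice_basis_iff, THEN conjunct2, rule_format, OF S] by blast
  have "e jz * u = 0" using z[rule_format, of jz] by simp
  then have e0: "e jz = 0" using u by (metis mult_eq_0_iff mult_zero_left zero_neq_one)
  show "e j = 0"
  proof (cases "j = jz")
    case True then show ?thesis using e0 by simp
  next
    case False then show ?thesis using z[rule_format, of j] e0 by simp
  qed
qed

lemma pairing_sum: "pairing (\<Sum>i\<in>I. a i *s w i) \<rho> = (\<Sum>i\<in>I. a i * pairing (w i) \<rho>)"
  unfolding pairing_def
  by (simp add: sum_distrib_left sum_distrib_right mult.assoc sum.swap[where A=I])

lemma pairing_smult: "pairing (m *s w) \<rho> = m * pairing w \<rho>"
  unfolding pairing_def by (simp add: sum_distrib_left mult.assoc)

lemma divis:
  assumes am: "amenable k E v" and rho: "\<forall>j\<in>{1..k}. \<rho> j \<in> E j" and K: "K \<le> k"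
    and eq: "(\<Sum>i\<in>{1..K}. a i *s v i) = m *s w"
  shows "\<forall>j\<in>{1..K}. m dvd a j"
proof -
  have "j \<in> {1..K} \<longrightarrow> m dvd a j" for j
  proof (induction j rule: less_induct)
    case (less j)
    show ?case
    proof
      assume j: "j \<in> {1..K}"
      have P: "(\<Sum>i\<in>{1..K}. a i * pairing (v i) (\<rho> j)) = m * pairing w (\<rho> j)"
        using arg_cong[OF eq, of "\<lambda>x. pairing x (\<rho> j)"] by (simp add: pairing_sum pairing_smult)
      have T: "a i * pairing (v i) (\<rho> j) = (if i < j then a i * pairing (v i) (\<rho> j) else 0) + (if i = j then - a j else 0)"
        if i: "i \<in> {1..K}" for i
      proof -
        have ik: "i \<in> {1..k}" and jk: "j \<in> {1..k}" using i j K by auto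
        have rj: "\<rho> j \<in> E j" using rho jk by auto
        consider "i < j" | "i = j" | "j < i" by linarith
        then show ?thesis
        proof cases
          case 1 then show ?thesis by simp
        next
          case 2 then show ?thesis using am ik rj unfolding amenable_def by auto
        next
          case 3
          then have "j \<in> {1..<i}" using jk by auto
          then have "pairing (v i) (\<rho> j) = 0" using am ik rj unfolding amenable_def by blast
          then show ?thesis using 3 by simp
        qed
      qed
      have "(\<Sum>i\<in>{1..K}. a i * pairing (v i) (\<rho> j))
          = (\<Sum>i\<in>{1..K}. (if i < j then a i * pairing (v i) (\<rho> j) else 0)) + (\<Sum>i\<in>{1..K}. (if i = j then - a j else 0))"
        by (subst sum.distrib[symmetric]) (rule sum.cong[OF refl T])
      also have "(\<Sum>i\<in>{1..K}. (if i = j then - a j else 0)) = - a j" using j by simp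
      finally have Q: "a j = (\<Sum>i\<in>{1..K}. (if i < j then a i * pairing (v i) (\<rho> j) else 0)) - m * pairing w (\<rho> j)"
        using P by simp
      have "m dvd (\<Sum>i\<in>{1..K}. (if i < j then a i * pairing (v i) (\<rho> j) else 0))"
        by (rule dvd_sum) (use less.IH in auto)
      then show "m dvd a j" unfolding Q by simp
    qed
  qed
  then show ?thesis by blast
qed

lemma euclid:
  fixes b :: "'n::finite \<Rightarrow> int^'n" and J :: "'n set"
  shows "lattice_basis b \<Longrightarrow> x = (\<Sum>j\<in>UNIV. c j *s b j) \<Longrightarrow>
    \<exists>b' c'. lattice_basis b' \<and> (\<forall>j\<in>J. b' j = b j) \<and> x = (\<Sum>j\<in>UNIV. c' j *s b' j) \<and>
      (\<forall>j\<in>J. c' j = c j) \<and> (\<forall>j l. j \<notin> J \<longrightarrow> l \<notin> J \<longrightarrow> c' j \<noteq> 0 \<longrightarrow> c' l \<noteq> 0 \<longrightarrow> j = l)"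
proof (induction "\<Sum>j\<in>-J. nat \<bar>c j\<bar>" arbitrary: b c rule: less_induct)
  case less
  show ?case
  proof (cases "\<forall>j l. j \<notin> J \<longrightarrow> l \<notin> J \<longrightarrow> c j \<noteq> 0 \<longrightarrow> c l \<noteq> 0 \<longrightarrow> j = l")
    case True then show ?thesis
      by (intro exI[of _ b] exI[of _ c]) (use less.prems in simp)
  next
    case False
    then obtain j0 l0 where jl0: "j0 \<notin> J" "l0 \<notin> J" "c j0 \<noteq> 0" "c l0 \<noteq> 0" "j0 \<noteq> l0" by blast
    obtain j l where jl: "j \<notin> J" "l \<notin> J" "c j \<noteq> 0" "c l \<noteq> 0" "j \<noteq> l" "\<bar>c j\<bar> \<le> \<bar>c l\<bar>"
    proof (cases "\<bar>c j0\<bar> \<le> \<bar>c l0\<bar>")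
      case True then show ?thesis using that jl0 by blast
    next
      case False then show ?thesis using that[of l0 j0] jl0 by auto
    qed
    define s where "s = sgn (c l) * sgn (c j)"
    define b1 where "b1 = b(j := b j + s *s b l)"
    define c1 where "c1 = c(l := c l - s * c j)"
    have ds: "(\<Sum>i\<in>UNIV. (if i = l then s else 0) *s b i) = s *s b l"
    proof -
      have "(\<Sum>i\<in>UNIV. (if i = l then s else 0) *s b i) = (\<Sum>i\<in>UNIV. (if i = l then s *s b l else 0))"
        by (rule sum.cong) (auto simp: vec_eq_iff)
      then show ?thesis by simp
    qed
    have b1': "b1 = b(j := 1 *s b j + (\<Sum>i\<in>UNIV. (if i = l then s else 0) *s b i))"
      unfolding ds b1_def by simp
    have B1: "lattice_basis b1" unfolding b1' by (rule replace_basis[OF less.prems(1)]) (use jl in auto)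
    have T: "c1 i *s b1 i = c i *s b i + ((if i = j then (c j * s) *s b l else 0) + (if i = l then (-(s * c j)) *s b l else 0))" for i
      using jl(5) by (auto simp: c1_def b1_def vec_eq_iff algebra_simps)
    have X1: "x = (\<Sum>i\<in>UNIV. c1 i *s b1 i)"
      unfolding T sum.distrib using less.prems(2) by (simp add: vec_eq_iff algebra_simps if_distrib cong: if_cong)
    have lt: "\<bar>c l - s * c j\<bar> < \<bar>c l\<bar>"
      using jl(3,4,6) unfolding s_def by (auto simp: sgn_if abs_if)
    have "(\<Sum>i\<in>-J. nat \<bar>c1 i\<bar>) = nat \<bar>c1 l\<bar> + (\<Sum>i\<in>-J-{l}. nat \<bar>c1 i\<bar>)"
      using jl(2) by (simp add: sum.remove)
    also have "(\<Sum>i\<in>-J-{l}. nat \<bar>c1 i\<bar>) = (\<Sum>i\<in>-J-{l}. nat \<bar>c i\<bar>)"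
      by (rule sum.cong) (auto simp: c1_def)
    also have "nat \<bar>c1 l\<bar> + (\<Sum>i\<in>-J-{l}. nat \<bar>c i\<bar>) < nat \<bar>c l\<bar> + (\<Sum>i\<in>-J-{l}. nat \<bar>c i\<bar>)"
      using lt by (simp add: c1_def)
    also have "\<dots> = (\<Sum>i\<in>-J. nat \<bar>c i\<bar>)"
      using jl(2) by (simp add: sum.remove)
    finally have M: "(\<Sum>i\<in>-J. nat \<bar>c1 i\<bar>) < (\<Sum>i\<in>-J. nat \<bar>c i\<bar>)" .
    obtain b' c' where R: "lattice_basis b'" "\<forall>i\<in>J. b' i = b1 i" "x = (\<Sum>i\<in>UNIV. c' i *s b' i)"
      "\<forall>i\<in>J. c' i = c1 i" "\<forall>j l. j \<notin> J \<longrightarrow> l \<notin> J \<longrightarrow> c' j \<noteq> 0 \<longrightarrow> c' l \<noteq> 0 \<longrightarrow> j = l"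
      using less.hyps[OF M B1 X1] by (elim exE conjE) simp
    have "\<forall>i\<in>J. b' i = b i" using R(2) jl(1) by (auto simp: b1_def)
    moreover have "\<forall>i\<in>J. c' i = c i" using R(4) jl(2) by (auto simp: c1_def)
    ultimately show ?thesis
      by (intro exI[of _ b'] exI[of _ c']) (use R in simp)
  qed
qed

lemma sum_split_compl: "finite (UNIV::'a set) \<Longrightarrow> sum g (UNIV::'a set) = sum g J + sum g (-J)"
proof -
  assume F: "finite (UNIV::'a set)"
  have "sum g (J \<union> -J) = sum g J + sum g (-J)"
    by (rule sum.union_disjoint) (use F in \<open>auto intro: finite_subset\<close>)
  then show ?thesis by simp
qed

lemma extend_step:
  fixes v :: "nat \<Rightarrow> int^'n::finite"
  assumes am: "amenable k E v" and rho: "\<forall>j\<in>{1..k}. \<rho> j \<in> E j" and SK: "Suc K \<le> k"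
    and B: "lattice_basis b" and inj: "inj_on f {1..K}" and bf: "\<forall>i\<in>{1..K}. b (f i) = v i"
  shows "\<exists>b f. lattice_basis b \<and> inj_on f {1..Suc K} \<and> (\<forall>i\<in>{1..Suc K}. b (f i) = v i)"
proof -
  define J where "J = f ` {1..K}"
  obtain c where c: "v (Suc K) = (\<Sum>j\<in>UNIV. c j *s b j)" using B unfolding lattice_basis_iff by blast
  obtain b' c' where R: "lattice_basis b'" "\<forall>j\<in>J. b' j = b j" "v (Suc K) = (\<Sum>j\<in>UNIV. c' j *s b' j)"
      "\<forall>j l. j \<notin> J \<longrightarrow> l \<notin> J \<longrightarrow> c' j \<noteq> 0 \<longrightarrow> c' l \<noteq> 0 \<longrightarrow> j = l"
    using euclid[OF B c, of J] by (elim exE conjE) (rule that, assumption+)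
  define Rv where "Rv = (\<Sum>j\<in>-J. c' j *s b' j)"
  have SJ: "(\<Sum>j\<in>J. c' j *s b' j) = (\<Sum>i\<in>{1..K}. c' (f i) *s v i)"
  proof -
    have "(\<Sum>j\<in>J. c' j *s b' j) = (\<Sum>i\<in>{1..K}. c' (f i) *s b' (f i))"
      unfolding J_def by (simp only: sum.reindex[OF inj] o_def)
    also have "\<dots> = (\<Sum>i\<in>{1..K}. c' (f i) *s v i)"
    proof (rule sum.cong[OF refl])
      fix i assume i: "i \<in> {1..K}"
      then have fi: "f i \<in> J" unfolding J_def by (rule imageI)
      have "b' (f i) = v i" using R(2)[rule_format, OF fi] bf[rule_format, OF i] by (rule trans)
      then show "c' (f i) *s b' (f i) = c' (f i) *s v i" by simp
    qed
    finally show ?thesis .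
  qed
  have vs: "v (Suc K) = (\<Sum>i\<in>{1..K}. c' (f i) *s v i) + Rv"
  proof -
    have "v (Suc K) = (\<Sum>j\<in>J. c' j *s b' j) + (\<Sum>j\<in>-J. c' j *s b' j)"
      unfolding R(3) by (rule sum_split_compl) simp
    then show ?thesis unfolding SJ Rv_def .
  qed
  define a where "a i = (if i = Suc K then 1 else - c' (f i))" for i
  have "(\<Sum>i\<in>{1..Suc K}. a i *s v i) = a (Suc K) *s v (Suc K) + (\<Sum>i\<in>{1..K}. a i *s v i)"
    by (simp add: atLeastAtMostSuc_conv sum.insert)
  also have "(\<Sum>i\<in>{1..K}. a i *s v i) = (\<Sum>i\<in>{1..K}. (- c' (f i)) *s v i)"
    by (rule sum.cong) (auto simp: a_def)
  also have "\<dots> = - (\<Sum>i\<in>{1..K}. c' (f i) *s v i)"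
    by (simp add: vec_eq_iff sum_negf)
  finally have AR: "(\<Sum>i\<in>{1..Suc K}. a i *s v i) = Rv"
    using vs by (simp add: a_def)
  have a1: "a (Suc K) = 1" by (simp add: a_def)
  have SKin: "Suc K \<in> {1..Suc K}" by simp
  show ?thesis
  proof (cases "\<exists>j0. j0 \<notin> J \<and> c' j0 \<noteq> 0")
    case False
    then have R0: "Rv = 0 *s 0" unfolding Rv_def by (auto intro!: sum.neutral simp: vec_eq_iff)
    have "\<forall>j\<in>{1..Suc K}. (0::int) dvd a j"
      by (rule divis[OF am rho SK]) (simp only: AR R0)
    then have "(0::int) dvd a (Suc K)" using SKin by blast
    then show ?thesis using a1 by simp
  next
    case True
    then obtain j0 where j0: "j0 \<notin> J" "c' j0 \<noteq> 0" by blast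
    have Rv0: "Rv = c' j0 *s b' j0"
    proof -
      have "Rv = (\<Sum>j\<in>-J. if j = j0 then c' j0 *s b' j0 else 0)"
        unfolding Rv_def by (rule sum.cong) (use R(4) j0 in auto)
      then show ?thesis using j0(1) by simp
    qed
    have "\<forall>j\<in>{1..Suc K}. c' j0 dvd a j"
      by (rule divis[OF am rho SK]) (simp only: AR Rv0)
    then have "c' j0 dvd a (Suc K)" using SKin by blast
    then have g: "c' j0 dvd 1" using a1 by simp
    then have "\<bar>c' j0\<bar> = 1" by (simp only: zdvd1_eq)
    then have "c' j0 = 1 \<or> c' j0 = -1" by linarith
    then have gg: "c' j0 * c' j0 = 1" by auto
    define d where "d l = (if l \<in> J then c' l else 0)" for l
    have d0: "d j0 = 0" using j0 by (simp add: d_def)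
    have sd: "(\<Sum>l\<in>UNIV. d l *s b' l) = (\<Sum>j\<in>J. c' j *s b' j)"
    proof -
      have "(\<Sum>l\<in>UNIV. d l *s b' l) = (\<Sum>l\<in>UNIV. if l \<in> J then c' l *s b' l else 0)"
        by (rule sum.cong) (auto simp: d_def vec_eq_iff)
      then show ?thesis by (simp add: sum.If_cases)
    qed
    have newv: "c' j0 *s b' j0 + (\<Sum>l\<in>UNIV. d l *s b' l) = v (Suc K)"
      using vs SJ Rv0 sd by (simp add: add.commute)
    define b'' where "b'' = b'(j0 := c' j0 *s b' j0 + (\<Sum>l\<in>UNIV. d l *s b' l))"
    have B'': "lattice_basis b''" unfolding b''_def by (rule replace_basis[where d=d and jz=j0 and u="c' j0", OF R(1) gg d0])
    define f' where "f' = f(Suc K := j0)"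
    have "inj_on f' {1..Suc K}"
    proof -
      have eqo: "\<And>x. x \<in> {1..K} \<Longrightarrow> f' x = f x" unfolding f'_def by simp
      have "inj_on f' {1..K} = inj_on f {1..K}" by (rule inj_on_cong) (rule eqo)
      then have i1: "inj_on f' {1..K}" using inj by simp
      have "f' ` {1..K} = f ` {1..K}" by (rule image_cong[OF refl eqo])
      then have i2: "f' (Suc K) \<notin> f' ` {1..K}" using j0(1) unfolding J_def by (simp add: f'_def)
      have X: "inj_on f' (insert (Suc K) {1..K})" using i1 i2 by (simp only: inj_on_insert) simp
      have Y: "insert (Suc K) {1..K} = {1..Suc K}" by auto
      show ?thesis using X unfolding Y .
    qed
    moreover have "\<forall>i\<in>{1..Suc K}. b'' (f' i) = v i"
    proof
      fix i assume i: "i \<in> {1..Suc K}"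
      show "b'' (f' i) = v i"
      proof (cases "i = Suc K")
        case True then show ?thesis using newv by (simp add: b''_def f'_def)
      next
        case False
        then have iK: "i \<in> {1..K}" using i by auto
        then have fJ: "f i \<in> J" unfolding J_def by auto
        then have "f i \<noteq> j0" using j0 by auto
        then show ?thesis using False fJ R(2) bf iK by (simp add: b''_def f'_def)
      qed
    qed
    ultimately show ?thesis
      by (intro exI[of _ b''] exI[of _ f']) (use B'' in simp)
  qed
qed

theorem proposition2p3:
  fixes \<Sigma> :: "(real^'n) set set" and k :: nat and E :: "nat \<Rightarrow> (int^'n) set"
    and \<phi> :: "nat \<Rightarrow> real^'n \<Rightarrow> real" and v :: "nat \<Rightarrow> int^'n"
  assumes "complete_fan \<Sigma>"
    and "Q_nef_partition \<Sigma> k E \<phi>"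
    and "amenable k E v"
  shows "saturated (zspan k v) \<and>
         (\<exists>b::'n \<Rightarrow> int^'n. lattice_basis b \<and> (\<forall>i\<in>{1..k}. \<exists>j. b j = v i))"
proof -
  note am = assms(3)
  define \<rho> where "\<rho> j = (SOME r. r \<in> E j)" for j
  have rho: "\<forall>j\<in>{1..k}. \<rho> j \<in> E j"
  proof
    fix j assume "j \<in> {1..k}"
    then have "E j \<noteq> {}" using assms(2) unfolding Q_nef_partition_def by auto
    then show "\<rho> j \<in> E j" unfolding \<rho>_def by (simp add: some_in_eq)
  qed
  have sat: "saturated (zspan k v)"
    unfolding saturated_def
  proof (intro allI impI, elim conjE)
    fix m :: int and w assume m: "m \<noteq> 0" and mw: "m *s w \<in> zspan k v"
    then obtain a where a: "m *s w = (\<Sum>i\<in>{1..k}. a i *s v i)" unfolding zspan_def by blast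
    have dv: "\<forall>j\<in>{1..k}. m dvd a j" using divis[OF am rho order_refl a[symmetric]] .
    define q where "q i = a i div m" for i
    have "(\<Sum>i\<in>{1..k}. a i *s v i) = (\<Sum>i\<in>{1..k}. m *s (q i *s v i))"
      by (rule sum.cong[OF refl]) (use dv in \<open>auto simp: q_def vec_eq_iff\<close>)
    also have "\<dots> = m *s (\<Sum>i\<in>{1..k}. q i *s v i)"
      by (simp add: vec_eq_iff sum_distrib_left mult.assoc)
    finally have "m *s w = m *s (\<Sum>i\<in>{1..k}. q i *s v i)" using a by simp
    then have "w = (\<Sum>i\<in>{1..k}. q i *s v i)" using m by (simp add: vec_eq_iff)
    then show "w \<in> zspan k v" unfolding zspan_def by blast
  qed
  have ind: "K \<le> k \<longrightarrow> (\<exists>b f. lattice_basis b \<and> inj_on f {1..K} \<and> (\<forall>i\<in>{1..K}. b (f i) = v i))" for K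
  proof (induction K)
    case 0
    show ?case using std_basis by fastforce
  next
    case (Suc K)
    show ?case
    proof
      assume SK: "Suc K \<le> k"
      then obtain b f where "lattice_basis b" "inj_on f {1..K}" "\<forall>i\<in>{1..K}. b (f i) = v i"
        using Suc.IH by auto
      then show "\<exists>b f. lattice_basis b \<and> inj_on f {1..Suc K} \<and> (\<forall>i\<in>{1..Suc K}. b (f i) = v i)"
        by (rule extend_step[OF am rho SK])
    qed
  qed
  then obtain b f where "lattice_basis b" "\<forall>i\<in>{1..k}. b (f i) = v i" by blast
  then show ?thesis using sat by blast
qed

end
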